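(* Let $\{\rho_\theta\}$ be a model as in the context and suppose $\theta\mapsto\rho_\theta$ is differentiable from the right at $\theta$, with right derivative $\rho'_\theta$. Take $c_n=\sqrt n$. Then $J^{R,1}_\theta=J^R_\theta$, where $J^R_\theta=\mathrm{Tr}(\rho_\theta L^R_\theta(L^R_\theta)^\dagger)$ and $L^R_\theta=\rho_\theta^{-1}\rho'_\theta$.
   Context: $\mathcal H$ finite-dimensional, $\rho_\theta>0$. $\Delta^1_\delta f(\theta)=(f(\theta+\delta)-f(\theta))/\delta$; $L^{R,n,1}_{\theta,\delta}$ solves $\Delta^1_\delta\rho_\theta^{\otimes n}=\rho_\theta^{\otimes n}L^{R,n,1}_{\theta,\delta}$; $J^{R,1}_\theta=\limsup_{h\to0+}\limsup_{n\to\infty}c_n^{-2}\mathrm{Tr}\big(\rho_\theta^{\otimes n}L^{R,n,1}_{\theta,h/c_n}(L^{R,n,1}_{\theta,h/c_n})^\dagger\big)$. *)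

theory Defs
  imports "HOL-Analysis.Analysis" "Jordan_Normal_Form.Schur_Decomposition"
begin

definition mtrace :: "complex mat \<Rightarrow> complex" where
  "mtrace A = (\<Sum>i<dim_row A. A $$ (i, i))"

definition kron :: "complex mat \<Rightarrow> complex mat \<Rightarrow> complex mat" where
  "kron A B = mat (dim_row A * dim_row B) (dim_col A * dim_col B)
     (\<lambda>(i, j). A $$ (i div dim_row B, j div dim_col B) * B $$ (i mod dim_row B, j mod dim_col B))"

fun tpow :: "complex mat \<Rightarrow> nat \<Rightarrow> complex mat" where
  "tpow A 0 = 1\<^sub>m 1"
| "tpow A (Suc n) = kron A (tpow A n)"

definition minv :: "complex mat \<Rightarrow> complex mat" where
  "minv A = (THE B. B \<in> carrier_mat (dim_row A) (dim_row A) \<and>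
                    A * B = 1\<^sub>m (dim_row A) \<and> B * A = 1\<^sub>m (dim_row A))"

definition pos_def :: "nat \<Rightarrow> complex mat \<Rightarrow> bool" where
  "pos_def d A \<longleftrightarrow> A \<in> carrier_mat d d \<and> mat_adjoint A = A \<and>
     (\<forall>v \<in> carrier_vec d. v \<noteq> 0\<^sub>v d \<longrightarrow>
        Im (conjugate v \<bullet> (A *\<^sub>v v)) = 0 \<and> Re (conjugate v \<bullet> (A *\<^sub>v v)) > 0)"

definition faithful_state :: "nat \<Rightarrow> complex mat \<Rightarrow> bool" where
  "faithful_state d A \<longleftrightarrow> pos_def d A \<and> mtrace A = 1"

definition Delta1 :: "(real \<Rightarrow> complex mat) \<Rightarrow> nat \<Rightarrow> real \<Rightarrow> real \<Rightarrow> complex mat" where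
  "Delta1 \<rho> n \<theta> \<delta> = of_real (1 / \<delta>) \<cdot>\<^sub>m (tpow (\<rho> (\<theta> + \<delta>)) n - tpow (\<rho> \<theta>) n)"

definition LRn1 :: "(real \<Rightarrow> complex mat) \<Rightarrow> nat \<Rightarrow> real \<Rightarrow> real \<Rightarrow> complex mat" where
  "LRn1 \<rho> n \<theta> \<delta> = (THE L. L \<in> carrier_mat (dim_row (tpow (\<rho> \<theta>) n)) (dim_row (tpow (\<rho> \<theta>) n))
        \<and> Delta1 \<rho> n \<theta> \<delta> = tpow (\<rho> \<theta>) n * L)"

definition JR1 :: "(real \<Rightarrow> complex mat) \<Rightarrow> real \<Rightarrow> (nat \<Rightarrow> real) \<Rightarrow> ereal" where
  "JR1 \<rho> \<theta> c = Limsup (at_right 0) (\<lambda>h. Limsup sequentially (\<lambda>n.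
      ereal (Re (mtrace (tpow (\<rho> \<theta>) n * LRn1 \<rho> n \<theta> (h / c n)
                         * mat_adjoint (LRn1 \<rho> n \<theta> (h / c n)))) / (c n)\<^sup>2)))"

definition has_right_deriv_mat :: "nat \<Rightarrow> (real \<Rightarrow> complex mat) \<Rightarrow> complex mat \<Rightarrow> real \<Rightarrow> bool" where
  "has_right_deriv_mat d \<rho> D \<theta> \<longleftrightarrow> D \<in> carrier_mat d d \<and>
     (\<forall>i<d. \<forall>j<d. ((\<lambda>t. \<rho> t $$ (i, j)) has_vector_derivative D $$ (i, j)) (at \<theta> within {\<theta>..}))"

end

theory Submission
  imports Defs
begin


lemma sum_divmod:
  assumes q: "(q::nat) > 0"
  shows "(\<Sum>k<b*q. f (k div q) (k mod q)) = (\<Sum>i<b. \<Sum>j<q. f i j)"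
proof -
  have "(\<Sum>i<b. \<Sum>j<q. f i j) = (\<Sum>p\<in>{..<b}\<times>{..<q}. f (fst p) (snd p))"
    by (simp add: sum.cartesian_product split_beta)
  also have "\<dots> = (\<Sum>k<b*q. f (k div q) (k mod q))"
  proof (rule sum.reindex_bij_witness[where i="\<lambda>k. (k div q, k mod q)" and j="\<lambda>p. fst p * q + snd p"])
    fix p assume p: "p \<in> {..<b}\<times>{..<q}"
    then show "((fst p * q + snd p) div q, (fst p * q + snd p) mod q) = p" using q
      by (auto simp: prod_eq_iff)
  next
    fix p assume p: "p \<in> {..<b}\<times>{..<q}"
    then obtain i j where ij: "p = (i,j)" "i < b" "j < q" by auto
    have "i * q + j < (i+1) * q" using ij by simp
    also have "\<dots> \<le> b * q" using ij by (intro mult_right_mono) auto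
    finally show "fst p * q + snd p \<in> {..<b*q}" using ij by simp
  next
    fix k assume "k \<in> {..<b*q}"
    then show "fst (k div q, k mod q) * q + snd (k div q, k mod q) = k" by simp
  next
    fix k assume "k \<in> {..<b*q}"
    then show "(k div q, k mod q) \<in> {..<b}\<times>{..<q}" using q
      by (auto simp: less_mult_imp_div_less)
  next
    fix p assume "p \<in> {..<b}\<times>{..<q}"
    then show "f ((fst p * q + snd p) div q) ((fst p * q + snd p) mod q) = f (fst p) (snd p)"
      using q by auto
  qed
  finally show ?thesis by simp
qed

lemma kron_carrier: "A \<in> carrier_mat a b \<Longrightarrow> B \<in> carrier_mat c e \<Longrightarrow> kron A B \<in> carrier_mat (a*c) (b*e)"
  by (auto simp: kron_def)

lemma kron_dims[simp]: "dim_row (kron A B) = dim_row A * dim_row B" "dim_col (kron A B) = dim_col A * dim_col B"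
  by (auto simp: kron_def)

lemma kron_entry: "i < dim_row A * dim_row B \<Longrightarrow> j < dim_col A * dim_col B \<Longrightarrow>
  kron A B $$ (i, j) = A $$ (i div dim_row B, j div dim_col B) * B $$ (i mod dim_row B, j mod dim_col B)"
  by (auto simp: kron_def)

lemma mult_entry:
  assumes "A \<in> carrier_mat m k" "B \<in> carrier_mat k n" "i < m" "j < n"
  shows "(A * B) $$ (i, j) = (\<Sum>l<k. A $$ (i, l) * B $$ (l, j))"
  using assms by (auto simp: scalar_prod_def lessThan_atLeast0 intro!: sum.cong)

lemma divmod_bounds:
  assumes "(i::nat) < a * p"
  shows "i div p < a" "i mod p < p" "p > 0"
proof -
  show p: "p > 0" using assms by (cases p) auto
  show "i div p < a" using assms by (simp add: less_mult_imp_div_less)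
  show "i mod p < p" using p by simp
qed

lemma kron_mult:
  assumes A: "A \<in> carrier_mat a b" and B: "B \<in> carrier_mat b c"
    and C: "C \<in> carrier_mat p q" and D: "D \<in> carrier_mat q r" and q: "q > 0"
  shows "kron A C * kron B D = kron (A * B) (C * D)"
proof (rule eq_matI)
  show "dim_row (kron A C * kron B D) = dim_row (kron (A * B) (C * D))"
    "dim_col (kron A C * kron B D) = dim_col (kron (A * B) (C * D))"
    using assms by auto
  fix i j assume i: "i < dim_row (kron (A * B) (C * D))" and j: "j < dim_col (kron (A * B) (C * D))"
  then have i': "i < a * p" and j': "j < c * r" using assms by auto
  note bi = divmod_bounds[OF i'] and bj = divmod_bounds[OF j']
  have "(kron A C * kron B D) $$ (i, j) = (\<Sum>k<b*q. kron A C $$ (i,k) * kron B D $$ (k,j))"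
    by (rule mult_entry[OF kron_carrier[OF A C] kron_carrier[OF B D] i' j'])
  also have "\<dots> = (\<Sum>k<b*q. (A $$ (i div p, k div q) * B $$ (k div q, j div r)) *
       (C $$ (i mod p, k mod q) * D $$ (k mod q, j mod r)))"
    using assms i' j' by (intro sum.cong refl) (auto simp: kron_entry algebra_simps)
  also have "\<dots> = (\<Sum>k1<b. \<Sum>k2<q. (A $$ (i div p, k1) * B $$ (k1, j div r)) *
       (C $$ (i mod p, k2) * D $$ (k2, j mod r)))"
    by (rule sum_divmod[OF q, where f="\<lambda>k1 k2. (A $$ (i div p, k1) * B $$ (k1, j div r)) *
       (C $$ (i mod p, k2) * D $$ (k2, j mod r))"])
  also have "\<dots> = (\<Sum>k1<b. A $$ (i div p, k1) * B $$ (k1, j div r)) *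
       (\<Sum>k2<q. C $$ (i mod p, k2) * D $$ (k2, j mod r))"
    by (simp add: sum_product)
  also have "\<dots> = (A * B) $$ (i div p, j div r) * (C * D) $$ (i mod p, j mod r)"
    using bi bj by (simp add: mult_entry[OF A B] mult_entry[OF C D])
  also have "\<dots> = kron (A * B) (C * D) $$ (i, j)"
    using assms i' j' by (simp add: kron_entry)
  finally show "(kron A C * kron B D) $$ (i, j) = kron (A * B) (C * D) $$ (i, j)" .
qed

lemma tpow_carrier: "A \<in> carrier_mat d d \<Longrightarrow> tpow A n \<in> carrier_mat (d^n) (d^n)"
  by (induction n) (auto intro!: kron_carrier)

lemma tpow_mult:
  assumes A: "A \<in> carrier_mat d d" and B: "B \<in> carrier_mat d d" and d: "d > 0"
  shows "tpow A n * tpow B n = tpow (A * B) n"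
proof (induction n)
  case 0 then show ?case by simp
next
  case (Suc n)
  then show ?case
    using kron_mult[OF A B tpow_carrier[OF A] tpow_carrier[OF B]] d by simp
qed

lemma kron_one: "kron (1\<^sub>m a) (1\<^sub>m b) = 1\<^sub>m (a * b)"
proof (rule eq_matI)
  fix i j assume i: "i < dim_row (1\<^sub>m (a * b))" and j: "j < dim_col (1\<^sub>m (a * b))"
  then have i': "i < a * b" and j': "j < a * b" by auto
  note bi = divmod_bounds[OF i'] and bj = divmod_bounds[OF j']
  have "(i div b = j div b \<and> i mod b = j mod b) = (i = j)"
    by (metis div_mult_mod_eq)
  then show "kron (1\<^sub>m a) (1\<^sub>m b) $$ (i, j) = 1\<^sub>m (a * b) $$ (i, j)"
    using i' j' bi bj by (auto simp: kron_entry)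
qed auto

lemma tpow_one: "tpow (1\<^sub>m d) n = 1\<^sub>m (d^n)"
  by (induction n) (auto simp: kron_one)

lemma adj_entry[simp]: "i < dim_col A \<Longrightarrow> j < dim_row A \<Longrightarrow> mat_adjoint A $$ (i, j) = cnj (A $$ (j, i))"
  by (auto simp: mat_adjoint_def mat_of_rows_def)

lemma adj_dims[simp]: "dim_row (mat_adjoint A) = dim_col A" "dim_col (mat_adjoint A) = dim_row A"
  by (auto simp: mat_adjoint_def)

lemma kron_adj: "mat_adjoint (kron A B) = kron (mat_adjoint A) (mat_adjoint B)"
proof (rule eq_matI)
  fix i j assume i: "i < dim_row (kron (mat_adjoint A) (mat_adjoint B))"
    and j: "j < dim_col (kron (mat_adjoint A) (mat_adjoint B))"
  then have i': "i < dim_col A * dim_col B" and j': "j < dim_row A * dim_row B" by auto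
  note bi = divmod_bounds[OF i'] and bj = divmod_bounds[OF j']
  show "mat_adjoint (kron A B) $$ (i, j) = kron (mat_adjoint A) (mat_adjoint B) $$ (i, j)"
    using i' j' bi bj by (simp add: kron_entry)
qed auto

lemma adj_one: "mat_adjoint (1\<^sub>m n) = (1\<^sub>m n :: complex mat)"
  by (rule eq_matI) auto

lemma tpow_adj: "mat_adjoint (tpow A n) = tpow (mat_adjoint A) n"
  by (induction n) (auto simp: kron_adj adj_one)

lemma mtrace_kron:
  assumes A: "A \<in> carrier_mat a a" and B: "B \<in> carrier_mat b b" and b: "b > 0"
  shows "mtrace (kron A B) = mtrace A * mtrace B"
proof -
  have "mtrace (kron A B) = (\<Sum>k<a*b. A $$ (k div b, k div b) * B $$ (k mod b, k mod b))"
    unfolding mtrace_def using assms by (auto intro!: sum.cong simp: kron_entry)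
  also have "\<dots> = (\<Sum>i<a. \<Sum>j<b. A $$ (i, i) * B $$ (j, j))"
    by (rule sum_divmod[OF b, where f="\<lambda>i j. A $$ (i, i) * B $$ (j, j)"])
  also have "\<dots> = mtrace A * mtrace B"
    unfolding mtrace_def using assms by (simp add: sum_product)
  finally show ?thesis .
qed

lemma mtrace_tpow:
  assumes A: "A \<in> carrier_mat d d" and d: "d > 0"
  shows "mtrace (tpow A n) = mtrace A ^ n"
proof (induction n)
  case 0 then show ?case by (simp add: mtrace_def)
next
  case (Suc n)
  then show ?case using mtrace_kron[OF A tpow_carrier[OF A]] d by simp
qed



lemma mtrace_minus: "X \<in> carrier_mat m m \<Longrightarrow> Y \<in> carrier_mat m m \<Longrightarrow> mtrace (X - Y) = mtrace X - mtrace Y"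
  unfolding mtrace_def by (auto simp: sum_subtractf)

lemma mtrace_smult: "X \<in> carrier_mat m m \<Longrightarrow> mtrace (c \<cdot>\<^sub>m X) = c * mtrace X"
  unfolding mtrace_def by (auto simp: sum_distrib_left)

lemma mtrace_one: "mtrace (1\<^sub>m m) = of_nat m"
  unfolding mtrace_def by auto

lemma adj_entry_c: "A \<in> carrier_mat m n \<Longrightarrow> i < n \<Longrightarrow> j < m \<Longrightarrow> mat_adjoint A $$ (i, j) = cnj (A $$ (j, i))"
  by auto

lemma mtrace_comm:
  assumes "A \<in> carrier_mat m k" "B \<in> carrier_mat k m"
  shows "mtrace (A * B) = mtrace (B * A)"
proof -
  have e1: "\<And>i. i < m \<Longrightarrow> (A * B) $$ (i, i) = (\<Sum>l<k. A $$ (i, l) * B $$ (l, i))"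
    by (rule mult_entry[OF assms]) 
  have e2: "\<And>i. i < k \<Longrightarrow> (B * A) $$ (i, i) = (\<Sum>l<m. B $$ (i, l) * A $$ (l, i))"
    by (rule mult_entry[OF assms(2,1)]) 
  have "mtrace (A * B) = (\<Sum>i<m. \<Sum>l<k. A $$ (i, l) * B $$ (l, i))"
    unfolding mtrace_def using assms e1 by auto
  also have "\<dots> = (\<Sum>l<k. \<Sum>i<m. B $$ (l, i) * A $$ (i, l))"
    by (subst sum.swap) (simp add: mult.commute)
  also have "\<dots> = mtrace (B * A)"
    unfolding mtrace_def using assms e2 by auto
  finally show ?thesis .
qed

lemma mtrace_adj: "A \<in> carrier_mat m m \<Longrightarrow> mtrace (mat_adjoint A) = cnj (mtrace A)"
  unfolding mtrace_def by auto

lemma adj_mult: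
  fixes A B :: "complex mat"
  assumes A: "A \<in> carrier_mat m k" and B: "B \<in> carrier_mat k n"
  shows "mat_adjoint (A * B) = mat_adjoint B * mat_adjoint A"
proof (rule eq_matI)
  fix i j assume "i < dim_row (mat_adjoint B * mat_adjoint A)" "j < dim_col (mat_adjoint B * mat_adjoint A)"
  then have i: "i < n" and j: "j < m" using assms by auto
  have Ba: "mat_adjoint B \<in> carrier_mat n k" and Aa: "mat_adjoint A \<in> carrier_mat k m" using assms by auto
  show "mat_adjoint (A * B) $$ (i, j) = (mat_adjoint B * mat_adjoint A) $$ (i, j)"
  proof -
    have AB: "A * B \<in> carrier_mat m n" using A B by auto
    have "mat_adjoint (A * B) $$ (i, j) = cnj ((A * B) $$ (j, i))" by (rule adj_entry_c[OF AB i j])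
    also have "\<dots> = (\<Sum>l<k. cnj (A $$ (j, l)) * cnj (B $$ (l, i)))"
      by (simp add: mult_entry[OF A B j i])
    also have "\<dots> = (mat_adjoint B * mat_adjoint A) $$ (i, j)"
      using A B i j by (simp add: mult_entry[OF Ba Aa i j] mult.commute)
    finally show ?thesis .
  qed
qed (use assms in auto)

lemma adj_smult_minus:
  fixes S P :: "complex mat"
  assumes "S \<in> carrier_mat m m" "P \<in> carrier_mat m m"
  shows "mat_adjoint (of_real r \<cdot>\<^sub>m (S - P)) = of_real r \<cdot>\<^sub>m (mat_adjoint S - mat_adjoint P)"
  by (rule eq_matI) (use assms in auto)



lemma trace_expand:
  fixes A B Bi :: "complex mat"
  assumes A: "A \<in> carrier_mat m m" and B: "B \<in> carrier_mat m m" and Bi: "Bi \<in> carrier_mat m m"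
    and BBi: "B * Bi = 1\<^sub>m m" and BiB: "Bi * B = 1\<^sub>m m"
  shows "mtrace ((A - B) * (A - B) * Bi) = mtrace (A * A * Bi) - 2 * mtrace A + mtrace B"
proof -
  have M: "A - B \<in> carrier_mat m m" using minus_carrier_mat[OF B] by blast
  have ABi: "A * Bi \<in> carrier_mat m m" using mult_carrier_mat[OF A Bi] .
  have "(A - B) * Bi = A * Bi - B * Bi"
    by (rule minus_mult_distrib_mat[OF A B Bi])
  then have MBi: "(A - B) * Bi = A * Bi - 1\<^sub>m m" by (simp only: BBi)
  have "(A - B) * (A - B) * Bi = (A - B) * ((A - B) * Bi)"
    by (rule assoc_mult_mat[OF M M Bi])
  also have "\<dots> = (A - B) * (A * Bi - 1\<^sub>m m)" by (simp only: MBi)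
  also have "\<dots> = A * (A * Bi - 1\<^sub>m m) - B * (A * Bi - 1\<^sub>m m)"
    by (rule minus_mult_distrib_mat[OF A B]) (use ABi in auto)
  also have "A * (A * Bi - 1\<^sub>m m) = A * (A * Bi) - A * 1\<^sub>m m"
    by (rule mult_minus_distrib_mat[OF A ABi]) auto
  also have "B * (A * Bi - 1\<^sub>m m) = B * (A * Bi) - B * 1\<^sub>m m"
    by (rule mult_minus_distrib_mat[OF B ABi]) auto
  finally have eq: "(A - B) * (A - B) * Bi = (A * (A * Bi) - A * 1\<^sub>m m) - (B * (A * Bi) - B * 1\<^sub>m m)" .
  have A1: "A * 1\<^sub>m m = A" using A by (rule right_mult_one_mat)
  have B1: "B * 1\<^sub>m m = B" using B by (rule right_mult_one_mat)
  have t1: "mtrace (B * (A * Bi)) = mtrace A"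
  proof -
    have "mtrace (B * (A * Bi)) = mtrace ((A * Bi) * B)"
      by (rule mtrace_comm[OF B ABi])
    also have "(A * Bi) * B = A * (Bi * B)" by (rule assoc_mult_mat[OF A Bi B])
    also have "\<dots> = A" unfolding BiB by (rule A1)
    finally show ?thesis .
  qed
  have t2: "A * (A * Bi) = A * A * Bi" by (rule assoc_mult_mat[OF A A Bi, symmetric])
  have c1: "A * (A * Bi) \<in> carrier_mat m m" "B * (A * Bi) \<in> carrier_mat m m"
    using mult_carrier_mat[OF A ABi] mult_carrier_mat[OF B ABi] .
  have X: "A * (A * Bi) - A \<in> carrier_mat m m" "B * (A * Bi) - B \<in> carrier_mat m m"
    using minus_carrier_mat[OF A] minus_carrier_mat[OF B] by blast+
  have tr: "mtrace ((A * (A * Bi) - A) - (B * (A * Bi) - B)) =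
     mtrace (A * (A * Bi)) - mtrace A - (mtrace (B * (A * Bi)) - mtrace B)"
    by (simp only: mtrace_minus[OF X] mtrace_minus[OF c1(1) A] mtrace_minus[OF c1(2) B])
  have ring: "\<And>x a b :: complex. x - a - (a - b) = x - 2 * a + b" by simp
  have fin: "mtrace ((A * (A * Bi) - A) - (B * (A * Bi) - B)) = mtrace (A * (A * Bi)) - 2 * mtrace A + mtrace B"
    unfolding tr t1 ring ..
  show ?thesis unfolding eq A1 B1 using fin unfolding t2 .
qed



lemma pos_def_inv:
  assumes "pos_def d A"
  shows "\<exists>B. B \<in> carrier_mat d d \<and> A * B = 1\<^sub>m d \<and> B * A = 1\<^sub>m d"
proof -
  have A: "A \<in> carrier_mat d d" using assms by (simp add: pos_def_def)
  have "det A \<noteq> 0"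
  proof
    assume "det A = 0"
    then obtain v where v: "v \<in> carrier_vec d" "v \<noteq> 0\<^sub>v d" "A *\<^sub>v v = 0\<^sub>v d"
      using det_0_iff_vec_prod_zero[OF A] by blast
    have "conjugate v \<bullet> (A *\<^sub>v v) = 0" using v by simp
    moreover have "Re (conjugate v \<bullet> (A *\<^sub>v v)) > 0" using assms v by (auto simp: pos_def_def)
    ultimately show False by simp
  qed
  from det_non_zero_imp_unit[OF A this, of undefined]
  show ?thesis unfolding Units_def ring_mat_def by auto
qed

lemma inv_unique:
  fixes A B C :: "complex mat"
  assumes A: "A \<in> carrier_mat d d" and B: "B \<in> carrier_mat d d" and C: "C \<in> carrier_mat d d"
    and AB: "A * B = 1\<^sub>m d" and CA: "C * A = 1\<^sub>m d"
  shows "C = B"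
proof -
  have "C = C * (A * B)" unfolding AB by (rule right_mult_one_mat[OF C, symmetric])
  also have "\<dots> = (C * A) * B" using assoc_mult_mat[OF C A B] by simp
  also have "\<dots> = B" using CA B by (simp add: left_mult_one_mat)
  finally show ?thesis .
qed

lemma minv_eq:
  assumes A: "A \<in> carrier_mat d d" and B: "B \<in> carrier_mat d d"
    and AB: "A * B = 1\<^sub>m d" and BA: "B * A = 1\<^sub>m d"
  shows "minv A = B"
  unfolding minv_def
proof (rule the_equality)
  show "B \<in> carrier_mat (dim_row A) (dim_row A) \<and> A * B = 1\<^sub>m (dim_row A) \<and> B * A = 1\<^sub>m (dim_row A)"
    using A B AB BA by simp
  fix C assume "C \<in> carrier_mat (dim_row A) (dim_row A) \<and> A * C = 1\<^sub>m (dim_row A) \<and> C * A = 1\<^sub>m (dim_row A)"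
  then have C: "C \<in> carrier_mat d d" "C * A = 1\<^sub>m d" using A by auto
  show "C = B" by (rule inv_unique[OF A B C(1) AB C(2)])
qed

lemma adj_inv:
  fixes A B :: "complex mat"
  assumes A: "A \<in> carrier_mat d d" and B: "B \<in> carrier_mat d d"
    and AB: "A * B = 1\<^sub>m d" and BA: "B * A = 1\<^sub>m d" and hA: "mat_adjoint A = A"
  shows "mat_adjoint B = B"
proof -
  have Ba: "mat_adjoint B \<in> carrier_mat d d" using B by auto
  have "mat_adjoint B * A = mat_adjoint B * mat_adjoint A" using hA by simp
  also have "\<dots> = mat_adjoint (A * B)" using adj_mult[OF A B] by simp
  also have "\<dots> = 1\<^sub>m d" unfolding AB by (rule adj_one)
  finally have "mat_adjoint B * A = 1\<^sub>m d" .
  then show ?thesis by (rule inv_unique[OF A B Ba AB])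
qed

lemma LRn1_eq:
  assumes r: "\<rho> \<theta> \<in> carrier_mat d d" and s: "\<rho> (\<theta> + \<delta>) \<in> carrier_mat d d"
    and R: "R \<in> carrier_mat d d" and rR: "\<rho> \<theta> * R = 1\<^sub>m d" and Rr: "R * \<rho> \<theta> = 1\<^sub>m d" and d: "d > 0"
  shows "LRn1 \<rho> n \<theta> \<delta> = tpow R n * Delta1 \<rho> n \<theta> \<delta>"
proof -
  let ?P = "tpow (\<rho> \<theta>) n" and ?Pi = "tpow R n" and ?D = "Delta1 \<rho> n \<theta> \<delta>"
  have P: "?P \<in> carrier_mat (d^n) (d^n)" by (rule tpow_carrier[OF r])
  have Pi: "?Pi \<in> carrier_mat (d^n) (d^n)" by (rule tpow_carrier[OF R])
  have Dc: "?D \<in> carrier_mat (d^n) (d^n)"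
    unfolding Delta1_def using tpow_carrier[OF s] P by (intro smult_carrier_mat minus_carrier_mat)
  have PPi: "?P * ?Pi = 1\<^sub>m (d^n)" using tpow_mult[OF r R d] rR by (simp add: tpow_one)
  have PiP: "?Pi * ?P = 1\<^sub>m (d^n)" using tpow_mult[OF R r d] Rr by (simp add: tpow_one)
  have dr: "dim_row ?P = d^n" using P by simp
  show ?thesis unfolding LRn1_def dr
  proof (rule the_equality)
    have "?P * (?Pi * ?D) = (?P * ?Pi) * ?D" using assoc_mult_mat[OF P Pi Dc] by simp
    also have "\<dots> = ?D" unfolding PPi by (rule left_mult_one_mat[OF Dc])
    finally show "?Pi * ?D \<in> carrier_mat (d^n) (d^n) \<and> ?D = ?P * (?Pi * ?D)"
      using mult_carrier_mat[OF Pi Dc] by simp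
  next
    fix L assume L: "L \<in> carrier_mat (d^n) (d^n) \<and> ?D = ?P * L"
    have "?Pi * ?D = (?Pi * ?P) * L" using L assoc_mult_mat[OF Pi P, of L "d^n"] by simp
    also have "\<dots> = L" unfolding PiP using L left_mult_one_mat[of L "d^n" "d^n"] by blast
    finally show "L = ?Pi * ?D" by simp
  qed
qed



lemma trace_G:
  fixes A B Bi :: "complex mat"
  assumes A: "A \<in> carrier_mat m m" and B: "B \<in> carrier_mat m m" and Bi: "Bi \<in> carrier_mat m m"
    and BBi: "B * Bi = 1\<^sub>m m" and BiB: "Bi * B = 1\<^sub>m m"
    and hA: "mat_adjoint A = A" and hB: "mat_adjoint B = B"
  shows "mtrace ((of_real c \<cdot>\<^sub>m (A - B)) * mat_adjoint (of_real c \<cdot>\<^sub>m (A - B)) * Bi)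
     = of_real c * (of_real c * (mtrace (A * A * Bi) - 2 * mtrace A + mtrace B))"
proof -
  let ?M = "A - B" and ?c = "(of_real c :: complex)"
  have M: "?M \<in> carrier_mat m m" using minus_carrier_mat[OF B] by blast
  have adj: "mat_adjoint (?c \<cdot>\<^sub>m ?M) = ?c \<cdot>\<^sub>m ?M"
    using adj_smult_minus[OF A B, of c] hA hB by simp
  have cM: "?c \<cdot>\<^sub>m ?M \<in> carrier_mat m m" using smult_carrier_mat[OF M] .
  have MM: "?M * ?M \<in> carrier_mat m m" using mult_carrier_mat[OF M M] .
  have "(?c \<cdot>\<^sub>m ?M) * (?c \<cdot>\<^sub>m ?M) = ?c \<cdot>\<^sub>m (?M * (?c \<cdot>\<^sub>m ?M))"
    by (rule mult_smult_assoc_mat[OF M cM])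
  also have "?M * (?c \<cdot>\<^sub>m ?M) = ?c \<cdot>\<^sub>m (?M * ?M)"
    by (rule mult_smult_distrib[OF M M])
  finally have e1: "(?c \<cdot>\<^sub>m ?M) * (?c \<cdot>\<^sub>m ?M) = ?c \<cdot>\<^sub>m (?c \<cdot>\<^sub>m (?M * ?M))" .
  have cMM: "?c \<cdot>\<^sub>m (?M * ?M) \<in> carrier_mat m m" using smult_carrier_mat[OF MM] .
  have "(?c \<cdot>\<^sub>m (?c \<cdot>\<^sub>m (?M * ?M))) * Bi = ?c \<cdot>\<^sub>m ((?c \<cdot>\<^sub>m (?M * ?M)) * Bi)"
    by (rule mult_smult_assoc_mat[OF cMM Bi])
  also have "(?c \<cdot>\<^sub>m (?M * ?M)) * Bi = ?c \<cdot>\<^sub>m ((?M * ?M) * Bi)"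
    by (rule mult_smult_assoc_mat[OF MM Bi])
  finally have e2: "(?c \<cdot>\<^sub>m (?c \<cdot>\<^sub>m (?M * ?M))) * Bi = ?c \<cdot>\<^sub>m (?c \<cdot>\<^sub>m (?M * ?M * Bi))" .
  have X: "?M * ?M * Bi \<in> carrier_mat m m" using mult_carrier_mat[OF MM Bi] .
  have X2: "?c \<cdot>\<^sub>m (?M * ?M * Bi) \<in> carrier_mat m m" using smult_carrier_mat[OF X] .
  show ?thesis
    unfolding adj e1 e2 mtrace_smult[OF X2] mtrace_smult[OF X] trace_expand[OF A B Bi BBi BiB] ..
qed

lemma trace_conj:
  fixes P Pi D :: "complex mat"
  assumes P: "P \<in> carrier_mat m m" and Pi: "Pi \<in> carrier_mat m m" and D: "D \<in> carrier_mat m m"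
    and PPi: "P * Pi = 1\<^sub>m m" and hPi: "mat_adjoint Pi = Pi"
  shows "P * (Pi * D) * mat_adjoint (Pi * D) = D * mat_adjoint D * Pi"
proof -
  have Da: "mat_adjoint D \<in> carrier_mat m m" using D by auto
  have "P * (Pi * D) = (P * Pi) * D" using assoc_mult_mat[OF P Pi D] by simp
  also have "\<dots> = D" unfolding PPi by (rule left_mult_one_mat[OF D])
  finally have e1: "P * (Pi * D) = D" .
  have e2: "mat_adjoint (Pi * D) = mat_adjoint D * Pi"
    using adj_mult[OF Pi D] hPi by simp
  show ?thesis unfolding e1 e2 using assoc_mult_mat[OF D Da Pi] by simp
qed

lemma step_n:
  fixes r s R :: "complex mat" and \<delta> :: real
  assumes r: "r \<in> carrier_mat d d" and s: "s \<in> carrier_mat d d" and R: "R \<in> carrier_mat d d"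
    and rR: "r * R = 1\<^sub>m d" and Rr: "R * r = 1\<^sub>m d"
    and hr: "mat_adjoint r = r" and hs: "mat_adjoint s = s" and hR: "mat_adjoint R = R"
    and tr: "mtrace r = 1" and ts: "mtrace s = 1" and d: "d > 0"
  shows "mtrace (tpow r n * (tpow R n * (of_real (1/\<delta>) \<cdot>\<^sub>m (tpow s n - tpow r n)))
           * mat_adjoint (tpow R n * (of_real (1/\<delta>) \<cdot>\<^sub>m (tpow s n - tpow r n))))
         = of_real (1/\<delta>) * (of_real (1/\<delta>) * (mtrace (s * s * R) ^ n - 1))"
proof -
  let ?P = "tpow r n" and ?S = "tpow s n" and ?Pi = "tpow R n" and ?N = "d^n"
  have P: "?P \<in> carrier_mat ?N ?N" by (rule tpow_carrier[OF r])
  have S: "?S \<in> carrier_mat ?N ?N" by (rule tpow_carrier[OF s])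
  have Pi: "?Pi \<in> carrier_mat ?N ?N" by (rule tpow_carrier[OF R])
  have PPi: "?P * ?Pi = 1\<^sub>m ?N" using tpow_mult[OF r R d] rR by (simp add: tpow_one)
  have PiP: "?Pi * ?P = 1\<^sub>m ?N" using tpow_mult[OF R r d] Rr by (simp add: tpow_one)
  have hP: "mat_adjoint ?P = ?P" using hr by (simp add: tpow_adj)
  have hS: "mat_adjoint ?S = ?S" using hs by (simp add: tpow_adj)
  have hPi: "mat_adjoint ?Pi = ?Pi" using hR by (simp add: tpow_adj)
  have Dc: "of_real (1/\<delta>) \<cdot>\<^sub>m (?S - ?P) \<in> carrier_mat ?N ?N"
    using smult_carrier_mat[OF minus_carrier_mat[OF P]] by blast
  have ss: "s * s \<in> carrier_mat d d" using mult_carrier_mat[OF s s] .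
  have SSPi: "?S * ?S * ?Pi = tpow (s * s * R) n"
    using tpow_mult[OF s s d] tpow_mult[OF ss R d] by simp
  have t1: "mtrace ?S = 1" using mtrace_tpow[OF s d] ts by simp
  have t2: "mtrace ?P = 1" using mtrace_tpow[OF r d] tr by simp
  have t3: "mtrace (?S * ?S * ?Pi) = mtrace (s * s * R) ^ n"
    unfolding SSPi by (rule mtrace_tpow[OF mult_carrier_mat[OF ss R] d])
  show ?thesis
    unfolding trace_conj[OF P Pi Dc PPi hPi] trace_G[OF S P Pi PPi PiP hS hP] t1 t2 t3
    by simp
qed

lemma step_1:
  fixes r s R :: "complex mat" and \<delta> :: real
  assumes r: "r \<in> carrier_mat d d" and s: "s \<in> carrier_mat d d" and R: "R \<in> carrier_mat d d"
    and rR: "r * R = 1\<^sub>m d" and Rr: "R * r = 1\<^sub>m d"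
    and hr: "mat_adjoint r = r" and hs: "mat_adjoint s = s"
    and tr: "mtrace r = 1" and ts: "mtrace s = 1" and dl: "\<delta> \<noteq> 0"
  shows "mtrace (s * s * R) = 1 + of_real (\<delta>^2) *
     mtrace ((of_real (1/\<delta>) \<cdot>\<^sub>m (s - r)) * mat_adjoint (of_real (1/\<delta>) \<cdot>\<^sub>m (s - r)) * R)"
  unfolding trace_G[OF s r R rR Rr hs hr] tr ts using dl
  by (simp add: field_simps power2_eq_square)



lemma dq:
  fixes f :: "real \<Rightarrow> complex"
  assumes "(f has_vector_derivative f') (at x within {x..})"
  shows "((\<lambda>\<delta>. of_real (1/\<delta>) * (f (x + \<delta>) - f x)) \<longlongrightarrow> f') (at_right 0)"
proof -
  have "((\<lambda>y. (1 / norm (y - x)) *\<^sub>R (f y - (f x + (y - x) *\<^sub>R f'))) \<longlongrightarrow> 0) (at_right x)"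
    using assms unfolding has_vector_derivative_def has_derivative_within at_within_Ici_at_right by simp
  then have "((\<lambda>\<delta>. (1 / norm (\<delta> + x - x)) *\<^sub>R (f (\<delta> + x) - (f x + (\<delta> + x - x) *\<^sub>R f'))) \<longlongrightarrow> 0) (at_right 0)"
    unfolding filterlim_at_right_to_0[of _ _ x] by simp
  then have "((\<lambda>\<delta>. (1 / norm (\<delta> + x - x)) *\<^sub>R (f (\<delta> + x) - (f x + (\<delta> + x - x) *\<^sub>R f')) + f') \<longlongrightarrow> 0 + f') (at_right 0)"
    by (intro tendsto_add tendsto_const)
  moreover have "eventually (\<lambda>\<delta>. (1 / norm (\<delta> + x - x)) *\<^sub>R (f (\<delta> + x) - (f x + (\<delta> + x - x) *\<^sub>R f')) + f'
      = of_real (1/\<delta>) * (f (x + \<delta>) - f x)) (at_right 0)"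
    unfolding eventually_at_right_less[of 0] 
  proof -
    have "eventually (\<lambda>\<delta>::real. \<delta> > 0) (at_right 0)" by (simp add: eventually_at_right_less)
    then show "eventually (\<lambda>\<delta>. (1 / norm (\<delta> + x - x)) *\<^sub>R (f (\<delta> + x) - (f x + (\<delta> + x - x) *\<^sub>R f')) + f'
      = of_real (1/\<delta>) * (f (x + \<delta>) - f x)) (at_right 0)"
      by eventually_elim (auto simp: scaleR_conv_of_real field_simps add.commute)
  qed
  ultimately show ?thesis by (simp add: tendsto_cong)
qed



lemma ln_bounds:
  fixes y :: real assumes "y > -1"
  shows "y / (1 + y) \<le> ln (1 + y)" "ln (1 + y) \<le> y"
proof -
  show "ln (1 + y) \<le> y" using ln_le_minus_one[of "1 + y"] assms by simp
  have "ln (1 / (1 + y)) \<le> 1 / (1 + y) - 1" using ln_le_minus_one[of "1 / (1 + y)"] assms by simp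
  moreover have "ln (1 / (1 + y)) = - ln (1 + y)" using assms by (simp add: ln_div)
  moreover have "1 / (1 + y) - 1 = - (y / (1 + y))" using assms by (simp add: field_simps)
  ultimately show "y / (1 + y) \<le> ln (1 + y)" by simp
qed

lemma exp_lim:
  fixes x :: "nat \<Rightarrow> real"
  assumes x: "x \<longlonglongrightarrow> a"
  shows "(\<lambda>n. (1 + x n / real n) ^ n) \<longlonglongrightarrow> exp a"
proof -
  have inv: "(\<lambda>n. 1 / real n) \<longlonglongrightarrow> 0"
    by (rule tendsto_divide_0[OF tendsto_const filterlim_at_top_imp_at_infinity[OF filterlim_real_sequentially]])
  have y0: "(\<lambda>n. x n / real n) \<longlonglongrightarrow> 0"
    using tendsto_mult[OF x inv] by simp
  then have ev1: "eventually (\<lambda>n. \<bar>x n / real n\<bar> < 1/2) sequentially"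
    using tendstoD[OF y0, of "1/2"] by (simp add: dist_real_def)
  have ev: "eventually (\<lambda>n. n > 0 \<and> \<bar>x n / real n\<bar> < 1/2) sequentially"
    using ev1 eventually_gt_at_top[of 0] by eventually_elim auto
  have low: "(\<lambda>n. x n / (1 + x n / real n)) \<longlonglongrightarrow> a / (1 + 0)"
    by (intro tendsto_divide x tendsto_add tendsto_const y0) simp
  have sq: "(\<lambda>n. real n * ln (1 + x n / real n)) \<longlonglongrightarrow> a"
  proof (rule tendsto_sandwich[OF _ _ low[simplified] x])
    show "eventually (\<lambda>n. x n / (1 + x n / real n) \<le> real n * ln (1 + x n / real n)) sequentially"
      using ev
    proof eventually_elim
      case (elim n)
      then have y: "x n / real n > -1" using abs_less_iff[of "x n / real n" "1/2"] by linarith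
      have "x n / (1 + x n / real n) = real n * ((x n / real n) / (1 + x n / real n))"
        using elim by (simp add: field_simps)
      also have "\<dots> \<le> real n * ln (1 + x n / real n)"
        by (rule mult_left_mono[OF ln_bounds(1)[OF y]]) simp
      finally show ?case .
    qed
    show "eventually (\<lambda>n. real n * ln (1 + x n / real n) \<le> x n) sequentially"
      using ev
    proof eventually_elim
      case (elim n)
      then have y: "x n / real n > -1" using abs_less_iff[of "x n / real n" "1/2"] by linarith
      have "real n * ln (1 + x n / real n) \<le> real n * (x n / real n)"
        by (rule mult_left_mono[OF ln_bounds(2)[OF y]]) simp
      also have "\<dots> = x n" using elim by simp
      finally show ?case .
    qed
  qed
  have "(\<lambda>n. exp (real n * ln (1 + x n / real n))) \<longlonglongrightarrow> exp a"
    by (rule tendsto_exp[OF sq])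
  moreover have "eventually (\<lambda>n. exp (real n * ln (1 + x n / real n)) = (1 + x n / real n) ^ n) sequentially"
    using ev
  proof eventually_elim
    case (elim n)
    then have "1 + x n / real n > 0" using abs_less_iff[of "x n / real n" "1/2"] by linarith
    then show ?case by (simp add: exp_of_nat_mult)
  qed
  ultimately show ?thesis by (simp add: tendsto_cong)
qed

lemma exp_quot:
  fixes J :: real
  shows "((\<lambda>h. (exp (h^2 * J) - 1) / h^2) \<longlongrightarrow> J) (at_right 0)"
proof -
  have "((\<lambda>y. exp (y * J)) has_field_derivative exp (0 * J) * J) (at 0)"
    by (auto intro!: derivative_eq_intros)
  then have d: "((\<lambda>y. (exp (y * J) - 1) / y) \<longlongrightarrow> J) (at 0)"
    unfolding has_field_derivative_iff by simp
  have f: "filterlim (\<lambda>h::real. h^2) (at 0) (at_right 0)"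
  proof (rule filterlim_atI)
    show "((\<lambda>h::real. h^2) \<longlongrightarrow> 0) (at_right 0)"
      by (rule tendsto_eq_intros) (auto intro: tendsto_eq_intros)
    show "eventually (\<lambda>h::real. h^2 \<noteq> 0) (at_right 0)"
      using eventually_at_right_less[of 0] by eventually_elim simp
  qed
  show ?thesis using filterlim_compose[OF d f] by simp
qed



lemma trace_entries:
  fixes X R :: "complex mat"
  assumes X: "X \<in> carrier_mat d d" and R: "R \<in> carrier_mat d d"
  shows "mtrace (X * mat_adjoint X * R) =
    (\<Sum>i<d. \<Sum>l<d. (\<Sum>k<d. X $$ (i, k) * cnj (X $$ (l, k))) * R $$ (l, i))"
proof -
  have Xa: "mat_adjoint X \<in> carrier_mat d d" using X by auto
  have XX: "X * mat_adjoint X \<in> carrier_mat d d" using mult_carrier_mat[OF X Xa] .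
  have dr: "dim_row (X * mat_adjoint X * R) = d" using X by simp
  show ?thesis unfolding mtrace_def dr
  proof (rule sum.cong[OF refl])
    fix i assume i: "i \<in> {..<d}"
    have "(X * mat_adjoint X * R) $$ (i, i) = (\<Sum>l<d. (X * mat_adjoint X) $$ (i, l) * R $$ (l, i))"
      using mult_entry[OF XX R, of i i] i by simp
    also have "\<dots> = (\<Sum>l<d. (\<Sum>k<d. X $$ (i, k) * cnj (X $$ (l, k))) * R $$ (l, i))"
    proof (rule sum.cong[OF refl])
      fix l assume l: "l \<in> {..<d}"
      have "(X * mat_adjoint X) $$ (i, l) = (\<Sum>k<d. X $$ (i, k) * mat_adjoint X $$ (k, l))"
        using mult_entry[OF X Xa, of i l] i l by simp
      also have "\<dots> = (\<Sum>k<d. X $$ (i, k) * cnj (X $$ (l, k)))"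
        using X l by (intro sum.cong refl) auto
      finally show "(X * mat_adjoint X) $$ (i, l) * R $$ (l, i) = (\<Sum>k<d. X $$ (i, k) * cnj (X $$ (l, k))) * R $$ (l, i)"
        by simp
    qed
    finally show "(X * mat_adjoint X * R) $$ (i, i) = (\<Sum>l<d. (\<Sum>k<d. X $$ (i, k) * cnj (X $$ (l, k))) * R $$ (l, i))" .
  qed
qed

lemma adj_adj: "mat_adjoint (mat_adjoint (A :: complex mat)) = A"
  by (rule eq_matI) auto

lemma im_zero:
  fixes D R :: "complex mat"
  assumes D: "D \<in> carrier_mat d d" and R: "R \<in> carrier_mat d d" and hR: "mat_adjoint R = R"
  shows "Im (mtrace (D * mat_adjoint D * R)) = 0"
proof -
  have Da: "mat_adjoint D \<in> carrier_mat d d" using D by auto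
  have DD: "D * mat_adjoint D \<in> carrier_mat d d" using mult_carrier_mat[OF D Da] .
  have M: "D * mat_adjoint D * R \<in> carrier_mat d d" using mult_carrier_mat[OF DD R] .
  have "cnj (mtrace (D * mat_adjoint D * R)) = mtrace (mat_adjoint (D * mat_adjoint D * R))"
    using mtrace_adj[OF M] by simp
  also have "mat_adjoint (D * mat_adjoint D * R) = mat_adjoint R * mat_adjoint (D * mat_adjoint D)"
    by (rule adj_mult[OF DD R])
  also have "mat_adjoint (D * mat_adjoint D) = mat_adjoint (mat_adjoint D) * mat_adjoint D"
    by (rule adj_mult[OF D Da])
  also have "mtrace (mat_adjoint R * (mat_adjoint (mat_adjoint D) * mat_adjoint D)) = mtrace (R * (D * mat_adjoint D))"
    by (simp add: hR adj_adj)
  also have "\<dots> = mtrace (D * mat_adjoint D * R)"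
    by (rule mtrace_comm[OF R DD])
  finally have "cnj (mtrace (D * mat_adjoint D * R)) = mtrace (D * mat_adjoint D * R)" .
  then have "Im (cnj (mtrace (D * mat_adjoint D * R))) = Im (mtrace (D * mat_adjoint D * R))" by simp
  then show ?thesis by simp
qed



lemma tend_ev_ereal:
  assumes "eventually (\<lambda>x. f x = g x) F" "(f \<longlongrightarrow> l) F"
  shows "((\<lambda>x. ereal (g x)) \<longlongrightarrow> ereal l) F"
proof -
  have "(g \<longlongrightarrow> l) F" using assms by (simp add: tendsto_cong)
  then show ?thesis by (rule tendsto_ereal)
qed

lemma tend_ev:
  assumes "eventually (\<lambda>x. g x = f x) F" "(f \<longlongrightarrow> l) F"
  shows "(g \<longlongrightarrow> l) F"
  using assms by (simp add: tendsto_cong)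

theorem mainTheorem6:
  fixes d :: nat and \<rho> :: "real \<Rightarrow> complex mat" and \<rho>' :: "complex mat"
    and \<Theta> :: "real set" and \<theta> :: real
  assumes model: "\<And>t. t \<in> \<Theta> \<Longrightarrow> faithful_state d (\<rho> t)"
    and theta_in: "\<theta> \<in> \<Theta>"
    and right_nbhd: "\<exists>\<epsilon>>0. {\<theta>..<\<theta> + \<epsilon>} \<subseteq> \<Theta>"
    and deriv: "has_right_deriv_mat d \<rho> \<rho>' \<theta>"
  shows "JR1 \<rho> \<theta> (\<lambda>n. sqrt (real n)) =
    ereal (Re (mtrace (\<rho> \<theta> * (minv (\<rho> \<theta>) * \<rho>') * mat_adjoint (minv (\<rho> \<theta>) * \<rho>'))))"
proof -
  obtain \<epsilon> where \<epsilon>: "\<epsilon> > 0" "{\<theta>..<\<theta> + \<epsilon>} \<subseteq> \<Theta>" using right_nbhd by blast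
  have sf: "\<rho> (\<theta> + \<delta>) \<in> carrier_mat d d \<and> mat_adjoint (\<rho> (\<theta> + \<delta>)) = \<rho> (\<theta> + \<delta>)
      \<and> mtrace (\<rho> (\<theta> + \<delta>)) = 1 \<and> pos_def d (\<rho> (\<theta> + \<delta>))" if "0 \<le> \<delta>" "\<delta> < \<epsilon>" for \<delta>
  proof -
    have "\<theta> + \<delta> \<in> \<Theta>" using \<epsilon> that by auto
    then show ?thesis using model unfolding faithful_state_def pos_def_def by blast
  qed
  have r: "\<rho> \<theta> \<in> carrier_mat d d" and hr: "mat_adjoint (\<rho> \<theta>) = \<rho> \<theta>" and tr: "mtrace (\<rho> \<theta>) = 1"
    and pr: "pos_def d (\<rho> \<theta>)"
    using sf[of 0] \<epsilon> by auto
  have d: "d > 0"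
  proof (rule ccontr)
    assume "\<not> d > 0"
    then have "d = 0" by simp
    then have "mtrace (\<rho> \<theta>) = 0" using r unfolding mtrace_def by simp
    then show False using tr by simp
  qed
  obtain R where R: "R \<in> carrier_mat d d" and rR: "\<rho> \<theta> * R = 1\<^sub>m d" and Rr: "R * \<rho> \<theta> = 1\<^sub>m d"
    using pos_def_inv[OF pr] by blast
  have minvR: "minv (\<rho> \<theta>) = R" by (rule minv_eq[OF r R rR Rr])
  have hR: "mat_adjoint R = R" by (rule adj_inv[OF r R rR Rr hr])
  have \<rho>'c: "\<rho>' \<in> carrier_mat d d" using deriv unfolding has_right_deriv_mat_def by blast
  define D where "D \<delta> = (of_real (1/\<delta>) :: complex) \<cdot>\<^sub>m (\<rho> (\<theta> + \<delta>) - \<rho> \<theta>)" for \<delta>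
  define g where "g \<delta> = mtrace (D \<delta> * mat_adjoint (D \<delta>) * R)" for \<delta>
  define Jc where "Jc = mtrace (\<rho>' * mat_adjoint \<rho>' * R)"
  define J where "J = Re Jc"
  have RHS: "mtrace (\<rho> \<theta> * (minv (\<rho> \<theta>) * \<rho>') * mat_adjoint (minv (\<rho> \<theta>) * \<rho>')) = Jc"
    unfolding minvR Jc_def trace_conj[OF r R \<rho>'c rR hR] ..
  have Dc: "D \<delta> \<in> carrier_mat d d" if "0 \<le> \<delta>" "\<delta> < \<epsilon>" for \<delta>
    unfolding D_def using sf[OF that] r by (intro smult_carrier_mat minus_carrier_mat) auto
  have img: "Im (g \<delta>) = 0" if "0 \<le> \<delta>" "\<delta> < \<epsilon>" for \<delta>
    unfolding g_def by (rule im_zero[OF Dc[OF that] R hR])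
  have a_eq: "mtrace (\<rho> (\<theta> + \<delta>) * \<rho> (\<theta> + \<delta>) * R) = of_real (1 + \<delta>^2 * Re (g \<delta>))"
    if "0 < \<delta>" "\<delta> < \<epsilon>" for \<delta>
  proof -
    have s: "\<rho> (\<theta> + \<delta>) \<in> carrier_mat d d" "mat_adjoint (\<rho> (\<theta> + \<delta>)) = \<rho> (\<theta> + \<delta>)"
      "mtrace (\<rho> (\<theta> + \<delta>)) = 1" using sf[of \<delta>] that by auto
    have "mtrace (\<rho> (\<theta> + \<delta>) * \<rho> (\<theta> + \<delta>) * R) = 1 + of_real (\<delta>^2) * g \<delta>"
      unfolding g_def D_def by (rule step_1[OF r s(1) R rR Rr hr s(2) tr s(3)]) (use that in simp)
    also have "g \<delta> = of_real (Re (g \<delta>))" using img[of \<delta>] that by (simp add: complex_eq_iff)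
    finally show ?thesis by simp
  qed
  have q: "((\<lambda>\<delta>. of_real (1/\<delta>) * (\<rho> (\<theta> + \<delta>) $$ (i, k) - \<rho> \<theta> $$ (i, k))) \<longlongrightarrow> \<rho>' $$ (i, k)) (at_right 0)"
    if "i < d" "k < d" for i k
    using deriv that unfolding has_right_deriv_mat_def by (intro dq) blast
  define F where "F \<delta> = (\<Sum>i<d. \<Sum>l<d. (\<Sum>k<d. (of_real (1/\<delta>) * (\<rho> (\<theta> + \<delta>) $$ (i, k) - \<rho> \<theta> $$ (i, k)))
      * cnj (of_real (1/\<delta>) * (\<rho> (\<theta> + \<delta>) $$ (l, k) - \<rho> \<theta> $$ (l, k)))) * R $$ (l, i))" for \<delta>
  have Flim: "(F \<longlongrightarrow> Jc) (at_right 0)"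
    unfolding F_def Jc_def trace_entries[OF \<rho>'c R]
    by (intro tendsto_sum tendsto_mult tendsto_cnj tendsto_const q) auto
  have evF: "eventually (\<lambda>\<delta>. F \<delta> = g \<delta>) (at_right 0)"
    using eventually_at_right_real[OF \<epsilon>(1)]
  proof eventually_elim
    case (elim \<delta>)
    then have \<delta>: "0 \<le> \<delta>" "\<delta> < \<epsilon>" by auto
    have s: "\<rho> (\<theta> + \<delta>) \<in> carrier_mat d d" using sf[OF \<delta>] by blast
    have ent: "D \<delta> $$ (i, k) = of_real (1/\<delta>) * (\<rho> (\<theta> + \<delta>) $$ (i, k) - \<rho> \<theta> $$ (i, k))"
      if "i < d" "k < d" for i k
      unfolding D_def using s r that by simp
    show ?case unfolding g_def trace_entries[OF Dc[OF \<delta>] R] F_def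
      by (simp add: ent)
  qed
  have glim: "(g \<longlongrightarrow> Jc) (at_right 0)"
    using Flim evF by (simp add: tendsto_cong)
  have Glim: "((\<lambda>\<delta>. Re (g \<delta>)) \<longlongrightarrow> J) (at_right 0)"
    unfolding J_def by (rule tendsto_Re[OF glim])
  have inner: "Re (mtrace (tpow (\<rho> \<theta>) n * LRn1 \<rho> n \<theta> (h / sqrt (real n))
        * mat_adjoint (LRn1 \<rho> n \<theta> (h / sqrt (real n))))) / (sqrt (real n))\<^sup>2
      = ((1 + h^2 * Re (g (h / sqrt (real n))) / real n) ^ n - 1) / h^2"
    if h: "h > 0" and n: "n > 0" and hn: "h / sqrt (real n) < \<epsilon>" for h n
  proof -
    define \<delta> where "\<delta> = h / sqrt (real n)"
    have \<delta>0: "\<delta> > 0" unfolding \<delta>_def using h n by simp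
    have \<delta>e: "\<delta> < \<epsilon>" unfolding \<delta>_def using hn .
    have s: "\<rho> (\<theta> + \<delta>) \<in> carrier_mat d d" "mat_adjoint (\<rho> (\<theta> + \<delta>)) = \<rho> (\<theta> + \<delta>)"
      "mtrace (\<rho> (\<theta> + \<delta>)) = 1" using sf[of \<delta>] \<delta>0 \<delta>e by auto
    define G where "G = Re (g \<delta>)"
    have L: "LRn1 \<rho> n \<theta> \<delta> = tpow R n * Delta1 \<rho> n \<theta> \<delta>"
      by (rule LRn1_eq[OF r s(1) R rR Rr d])
    have "mtrace (tpow (\<rho> \<theta>) n * LRn1 \<rho> n \<theta> \<delta> * mat_adjoint (LRn1 \<rho> n \<theta> \<delta>))
        = of_real (1/\<delta>) * (of_real (1/\<delta>) * (mtrace (\<rho> (\<theta> + \<delta>) * \<rho> (\<theta> + \<delta>) * R) ^ n - 1))"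
      unfolding L Delta1_def by (rule step_n[OF r s(1) R rR Rr hr s(2) hR tr s(3) d])
    also have "mtrace (\<rho> (\<theta> + \<delta>) * \<rho> (\<theta> + \<delta>) * R) = of_real (1 + \<delta>^2 * G)"
      unfolding G_def using a_eq \<delta>0 \<delta>e by blast
    finally have T: "Re (mtrace (tpow (\<rho> \<theta>) n * LRn1 \<rho> n \<theta> \<delta> * mat_adjoint (LRn1 \<rho> n \<theta> \<delta>)))
        = (1/\<delta>^2) * ((1 + \<delta>^2 * G) ^ n - 1)"
      by (simp del: of_real_power add: of_real_power[symmetric] power2_eq_square)
    have d2: "\<delta>^2 = h^2 / real n" unfolding \<delta>_def using n by (simp add: power_divide)
    have e1: "1 + \<delta>^2 * G = 1 + h^2 * G / real n" using d2 by simp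
    have e2: "1/\<delta>^2 = real n / h^2" using d2 by simp
    have sq: "(sqrt (real n))\<^sup>2 = real n" by simp
    have fin: "real n / h^2 * (X - 1) / real n = (X - 1) / h^2" for X :: real
      using n by simp
    show ?thesis unfolding \<delta>_def[symmetric] G_def[symmetric] T e1 e2 sq fin ..
  qed
  have inlim: "Limsup sequentially (\<lambda>n. ereal (Re (mtrace (tpow (\<rho> \<theta>) n * LRn1 \<rho> n \<theta> (h / sqrt (real n))
        * mat_adjoint (LRn1 \<rho> n \<theta> (h / sqrt (real n))))) / (sqrt (real n))\<^sup>2))
      = ereal ((exp (h^2 * J) - 1) / h^2)" if h: "h > 0" for h
  proof -
    have lim0: "(\<lambda>n. h / sqrt (real n)) \<longlonglongrightarrow> 0"
      by (rule tendsto_divide_0[OF tendsto_const filterlim_at_top_imp_at_infinity[OF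
            filterlim_compose[OF sqrt_at_top filterlim_real_sequentially]]])
    have evpos: "eventually (\<lambda>n. h / sqrt (real n) > 0) sequentially"
      using eventually_gt_at_top[of 0] by eventually_elim (use h in simp)
    have fl: "filterlim (\<lambda>n. h / sqrt (real n)) (at_right 0) sequentially"
      by (rule tendsto_imp_filterlim_at_right[OF lim0 evpos])
    have Gn: "(\<lambda>n. Re (g (h / sqrt (real n)))) \<longlonglongrightarrow> J"
      by (rule filterlim_compose[OF Glim fl])
    have xn: "(\<lambda>n. h^2 * Re (g (h / sqrt (real n)))) \<longlonglongrightarrow> h^2 * J"
      by (intro tendsto_mult tendsto_const Gn)
    have pw: "(\<lambda>n. (1 + h^2 * Re (g (h / sqrt (real n))) / real n) ^ n) \<longlonglongrightarrow> exp (h^2 * J)"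
      by (rule exp_lim[OF xn])
    have lim: "(\<lambda>n. ((1 + h^2 * Re (g (h / sqrt (real n))) / real n) ^ n - 1) / h^2)
        \<longlonglongrightarrow> (exp (h^2 * J) - 1) / h^2"
      by (intro tendsto_divide tendsto_diff pw tendsto_const) (use h in simp)
    have ev: "eventually (\<lambda>n. ((1 + h^2 * Re (g (h / sqrt (real n))) / real n) ^ n - 1) / h^2
        = Re (mtrace (tpow (\<rho> \<theta>) n * LRn1 \<rho> n \<theta> (h / sqrt (real n))
        * mat_adjoint (LRn1 \<rho> n \<theta> (h / sqrt (real n))))) / (sqrt (real n))\<^sup>2) sequentially"
      using eventually_gt_at_top[of 0] order_tendstoD(2)[OF lim0 \<epsilon>(1)]
      by eventually_elim (use inner h in simp)
    have "((\<lambda>n. ereal (Re (mtrace (tpow (\<rho> \<theta>) n * LRn1 \<rho> n \<theta> (h / sqrt (real n))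
        * mat_adjoint (LRn1 \<rho> n \<theta> (h / sqrt (real n))))) / (sqrt (real n))\<^sup>2))
        \<longlongrightarrow> ereal ((exp (h^2 * J) - 1) / h^2)) sequentially"
      by (rule tend_ev_ereal[OF ev lim])
    then show ?thesis by (intro lim_imp_Limsup) simp_all
  qed
  have evout: "eventually (\<lambda>h. Limsup sequentially (\<lambda>n. ereal (Re (mtrace (tpow (\<rho> \<theta>) n * LRn1 \<rho> n \<theta> (h / sqrt (real n))
        * mat_adjoint (LRn1 \<rho> n \<theta> (h / sqrt (real n))))) / (sqrt (real n))\<^sup>2))
      = ereal ((exp (h^2 * J) - 1) / h^2)) (at_right 0)"
    using eventually_at_right_less[of "0::real"] by eventually_elim (rule inlim)
  have "((\<lambda>h. Limsup sequentially (\<lambda>n. ereal (Re (mtrace (tpow (\<rho> \<theta>) n * LRn1 \<rho> n \<theta> (h / sqrt (real n))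
        * mat_adjoint (LRn1 \<rho> n \<theta> (h / sqrt (real n))))) / (sqrt (real n))\<^sup>2))) \<longlongrightarrow> ereal J) (at_right 0)"
    by (rule tend_ev[OF evout tendsto_ereal[OF exp_quot[of J]]])
  then have "JR1 \<rho> \<theta> (\<lambda>n. sqrt (real n)) = ereal J"
    unfolding JR1_def by (intro lim_imp_Limsup) simp_all
  then show ?thesis unfolding RHS J_def .
qed

end
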